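(* Let $Q$ be a countable weak-latin quandle and $<$ a right order on $Q$. Then there is an injective quandle homomorphism $\rho:Q\hookrightarrow\mathrm{Conj}(\mathrm{Homeo}_+(\mathbb{R}))$, i.e. an injective map with $\rho(r*s)=\rho(s)\circ\rho(r)\circ\rho(s)^{-1}$ for all $r,s\in Q$.
   Context: Quandle: set $Q$ with operation $*$ satisfying $q*q=q$, unique right division, and $(q*r)*s=(q*s)*(r*s)$. Weak-latin: for any $q,r\in Q$ there exists $\hat q\in Q$ such that $\hat q*q=\hat q*r$ implies $q=r$. A right order is a total order $<$ on $Q$ with $q_1<q_2\Rightarrow q_1*q<q_2*q$ for all $q$. Homeomorphisms act on the right; $\mathrm{Conj}(\mathrm{Homeo}_+(\mathbb{R}))$ is the quandle structure $f*g=g\circ f\circ g^{-1}$ on $\mathrm{Homeo}_+(\mathbb{R})$. *)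

theory Defs
  imports "HOL-Analysis.Analysis"
begin

definition quandle :: "'a set \<Rightarrow> ('a \<Rightarrow> 'a \<Rightarrow> 'a) \<Rightarrow> bool" where
  "quandle Q op \<longleftrightarrow>
     (\<forall>q\<in>Q. \<forall>r\<in>Q. op q r \<in> Q) \<and>
     (\<forall>q\<in>Q. op q q = q) \<and>
     (\<forall>q\<in>Q. \<forall>r\<in>Q. \<exists>!p. p \<in> Q \<and> op p r = q) \<and>
     (\<forall>q\<in>Q. \<forall>r\<in>Q. \<forall>s\<in>Q. op (op q r) s = op (op q s) (op r s))"

definition weak_latin :: "'a set \<Rightarrow> ('a \<Rightarrow> 'a \<Rightarrow> 'a) \<Rightarrow> bool" where
  "weak_latin Q op \<longleftrightarrow>
     (\<forall>q\<in>Q. \<forall>r\<in>Q. \<exists>qh\<in>Q. op qh q = op qh r \<longrightarrow> q = r)"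

definition right_order :: "'a set \<Rightarrow> ('a \<Rightarrow> 'a \<Rightarrow> 'a) \<Rightarrow> ('a \<Rightarrow> 'a \<Rightarrow> bool) \<Rightarrow> bool" where
  "right_order Q op lt \<longleftrightarrow>
     (\<forall>q\<in>Q. \<not> lt q q) \<and>
     (\<forall>a\<in>Q. \<forall>b\<in>Q. \<forall>c\<in>Q. lt a b \<and> lt b c \<longrightarrow> lt a c) \<and>
     (\<forall>a\<in>Q. \<forall>b\<in>Q. a \<noteq> b \<longrightarrow> lt a b \<or> lt b a) \<and>
     (\<forall>q1\<in>Q. \<forall>q2\<in>Q. \<forall>q\<in>Q. lt q1 q2 \<longrightarrow> lt (op q1 q) (op q2 q))"

definition Homeo_plus :: "(real \<Rightarrow> real) set" where
  "Homeo_plus = {f. (\<exists>g. homeomorphism UNIV UNIV f g) \<and> strict_mono f}"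

end

theory Submission
  imports Defs
begin

lemma strict_mono_surj_cont:
  fixes f :: "real \<Rightarrow> real"
  assumes sm: "strict_mono f" and su: "surj f"
  shows "continuous_on UNIV f"
proof -
  have "isCont f x" for x
    unfolding continuous_at_real_range
  proof (intro allI impI)
    fix e :: real assume e: "e > 0"
    obtain a where a: "f a = f x - e" using su by (metis surjD)
    obtain b where b: "f b = f x + e" using su by (metis surjD)
    have "f a < f x" using a e by simp
    then have ax: "a < x" using strict_mono_less[OF sm] by blast
    have "f x < f b" using b e by simp
    then have xb: "x < b" using strict_mono_less[OF sm] by blast
    show "\<exists>d>0. \<forall>y. norm (y - x) < d \<longrightarrow> \<bar>f y - f x\<bar> < e"
    proof (intro exI[of _ "min (x - a) (b - x)"] conjI allI impI)
      show "0 < min (x - a) (b - x)" using ax xb by simp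
      fix y assume "norm (y - x) < min (x - a) (b - x)"
      then have "a < y" "y < b" by auto
      then have "f a < f y" "f y < f b" using sm by (auto simp: strict_mono_less)
      then show "\<bar>f y - f x\<bar> < e" using a b by auto
    qed
  qed
  then show ?thesis by (simp add: continuous_at_imp_continuous_on)
qed

lemma homeo_plus_intro:
  fixes f g :: "real \<Rightarrow> real"
  assumes mf: "mono f" and mg: "mono g" and fg: "\<And>x. f (g x) = x" and gf: "\<And>x. g (f x) = x"
  shows "f \<in> Homeo_plus"
proof -
  have sf: "strict_mono f"
  proof (rule strict_monoI)
    fix x y :: real assume "x < y"
    moreover have "f x \<noteq> f y" using gf \<open>x < y\<close> by (metis less_irrefl)
    moreover have "f x \<le> f y" using mf \<open>x < y\<close> by (simp add: monoD)
    ultimately show "f x < f y" by simp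
  qed
  have sg: "strict_mono g"
  proof (rule strict_monoI)
    fix x y :: real assume "x < y"
    moreover have "g x \<noteq> g y" using fg \<open>x < y\<close> by (metis less_irrefl)
    moreover have "g x \<le> g y" using mg \<open>x < y\<close> by (simp add: monoD)
    ultimately show "g x < g y" by simp
  qed
  have uf: "surj f" using fg by (rule surjI)
  have ug: "surj g" using gf by (rule surjI)
  have "homeomorphism UNIV UNIV f g"
    unfolding homeomorphism_def
    using strict_mono_surj_cont[OF sf uf] strict_mono_surj_cont[OF sg ug] uf ug fg gf by auto
  then show ?thesis unfolding Homeo_plus_def using sf by auto
qed

definition clamp :: "real \<Rightarrow> real" where "clamp t = max 0 (min 1 t)"

locale ordQ =
  fixes Q :: "'a set" and lt :: "'a \<Rightarrow> 'a \<Rightarrow> bool"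
  assumes cQ: "countable Q"
    and irr: "\<And>q. q \<in> Q \<Longrightarrow> \<not> lt q q"
    and trn: "\<And>a b c. a \<in> Q \<Longrightarrow> b \<in> Q \<Longrightarrow> c \<in> Q \<Longrightarrow> lt a b \<Longrightarrow> lt b c \<Longrightarrow> lt a c"
    and tot: "\<And>a b. a \<in> Q \<Longrightarrow> b \<in> Q \<Longrightarrow> a \<noteq> b \<Longrightarrow> lt a b \<or> lt b a"
begin

definition w :: "'a \<Rightarrow> real" where "w q = (1/2) ^ to_nat_on Q q"
definition W :: "'a set \<Rightarrow> real" where "W A = infsum w A"
definition dn :: "'a \<Rightarrow> 'a set" where "dn q = {p \<in> Q. lt p q}"
definition phi :: "'a \<Rightarrow> real" where "phi q = W (dn q)"
definition T :: real where "T = W Q"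
definition G :: "('a \<Rightarrow> 'a) \<Rightarrow> real \<Rightarrow> real" where
  "G f x = infsum (\<lambda>p. w (f p) * clamp ((x - phi p) / w p)) Q"
definition H :: "('a \<Rightarrow> 'a) \<Rightarrow> real \<Rightarrow> real" where
  "H f x = G f x + min x 0 + max (x - T) 0"
definition aut :: "('a \<Rightarrow> 'a) \<Rightarrow> bool" where
  "aut f \<longleftrightarrow> bij_betw f Q Q \<and> (\<forall>p\<in>Q. \<forall>q\<in>Q. lt p q \<longrightarrow> lt (f p) (f q))"
definition downset :: "'a set \<Rightarrow> bool" where
  "downset L \<longleftrightarrow> L \<subseteq> Q \<and> (\<forall>q\<in>L. \<forall>p\<in>Q. lt p q \<longrightarrow> p \<in> L)"

lemma w_pos: "0 < w q" unfolding w_def by simp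

lemma w_summ_UNIV: "(\<lambda>n::nat. (1/2::real) ^ n) summable_on UNIV"
  by (rule summable_nonneg_imp_summable_on) auto

lemma w_summ: "A \<subseteq> Q \<Longrightarrow> w summable_on A"
proof -
  assume A: "A \<subseteq> Q"
  have "(\<lambda>n::nat. (1/2::real) ^ n) summable_on (to_nat_on Q ` Q)"
    using w_summ_UNIV summable_on_subset_banach by blast
  then have "((\<lambda>n::nat. (1/2::real) ^ n) \<circ> to_nat_on Q) summable_on Q"
    using summable_on_reindex[OF inj_on_to_nat_on[OF cQ]] by blast
  then have "w summable_on Q" by (simp add: w_def[abs_def] o_def)
  then show ?thesis using A summable_on_subset_banach by blast
qed

lemma W_nonneg: "0 \<le> W A"
  unfolding W_def by (rule infsum_nonneg) (simp add: less_imp_le w_pos)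

lemma W_mono: "A \<subseteq> B \<Longrightarrow> B \<subseteq> Q \<Longrightarrow> W A \<le> W B"
  unfolding W_def
  by (rule infsum_mono2) (auto intro: w_summ simp: less_imp_le w_pos)

lemma W_Un: "A \<subseteq> Q \<Longrightarrow> B \<subseteq> Q \<Longrightarrow> A \<inter> B = {} \<Longrightarrow> W (A \<union> B) = W A + W B"
  unfolding W_def by (rule infsum_Un_disjoint) (auto intro: w_summ)

lemma W_insert: "A \<subseteq> Q \<Longrightarrow> p \<notin> A \<Longrightarrow> W (insert p A) = w p + W A"
  unfolding W_def by (rule infsum_insert) (auto intro: w_summ)

lemma W_finite: "finite F \<Longrightarrow> W F = sum w F"
  unfolding W_def by (rule infsum_finite)

lemma aut_in: "aut f \<Longrightarrow> q \<in> Q \<Longrightarrow> f q \<in> Q"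
  unfolding aut_def bij_betw_def by auto

lemma aut_inj: "aut f \<Longrightarrow> inj_on f Q"
  unfolding aut_def bij_betw_def by auto

lemma aut_img: "aut f \<Longrightarrow> f ` Q = Q"
  unfolding aut_def bij_betw_def by auto

lemma aut_lt: "aut f \<Longrightarrow> p \<in> Q \<Longrightarrow> q \<in> Q \<Longrightarrow> lt (f p) (f q) \<longleftrightarrow> lt p q"
proof
  assume a: "aut f" "p \<in> Q" "q \<in> Q" "lt (f p) (f q)"
  show "lt p q"
  proof (rule ccontr)
    assume "\<not> lt p q"
    then have "p = q \<or> lt q p" using tot a by blast
    then show False
      using a irr[of "f p"] aut_in[OF a(1)] trn[of "f p" "f q" "f p"] unfolding aut_def by blast
  qed
qed (auto simp: aut_def)

lemma aut_Wimg: "aut f \<Longrightarrow> A \<subseteq> Q \<Longrightarrow> infsum (\<lambda>p. w (f p)) A = W (f ` A)"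
proof -
  assume a: "aut f" "A \<subseteq> Q"
  then have "inj_on f A" using aut_inj inj_on_subset by blast
  then show ?thesis unfolding W_def using infsum_reindex[of f A w] by (simp add: o_def)
qed

lemma aut_dn: "aut f \<Longrightarrow> q \<in> Q \<Longrightarrow> f ` dn q = dn (f q)"
proof -
  assume a: "aut f" "q \<in> Q"
  show ?thesis
  proof
    show "f ` dn q \<subseteq> dn (f q)" using a aut_in unfolding dn_def aut_def by auto
    show "dn (f q) \<subseteq> f ` dn q"
    proof
      fix p assume p: "p \<in> dn (f q)"
      then have "p \<in> f ` Q" using aut_img[OF a(1)] by (auto simp: dn_def)
      then obtain p' where p': "p' \<in> Q" "p = f p'" by blast
      then have "lt p' q" using p a aut_lt[OF a(1) p'(1) a(2)] by (auto simp: dn_def)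
      then show "p \<in> f ` dn q" using p' by (auto simp: dn_def)
    qed
  qed
qed

lemma aut_downset: "aut f \<Longrightarrow> downset L \<Longrightarrow> downset (f ` L)"
proof -
  assume a: "aut f" "downset L"
  show ?thesis unfolding downset_def
  proof (intro conjI ballI impI)
    show "f ` L \<subseteq> Q" using a aut_in unfolding downset_def by auto
    fix q p assume q: "q \<in> f ` L" and p: "p \<in> Q" and pq: "lt p q"
    obtain q' where q': "q' \<in> L" "q = f q'" using q by blast
    have "p \<in> f ` Q" using p aut_img[OF a(1)] by simp
    then obtain p' where p': "p' \<in> Q" "p = f p'" by blast
    have "q' \<in> Q" using q' a unfolding downset_def by auto
    then have "lt p' q'" using aut_lt[OF a(1) p'(1)] pq p' q' by simp
    then show "p \<in> f ` L" using a(2) q' p' unfolding downset_def by auto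
  qed
qed

lemma dn_sub: "dn q \<subseteq> Q" unfolding dn_def by auto

lemma phi_plus: "q \<in> Q \<Longrightarrow> phi q + w q = W (insert q (dn q))"
  using W_insert[OF dn_sub, of q] irr by (auto simp: phi_def dn_def)

lemma phi_lt: "p \<in> Q \<Longrightarrow> q \<in> Q \<Longrightarrow> lt p q \<Longrightarrow> phi p + w p \<le> phi q"
  unfolding phi_plus phi_def
  by (subst phi_plus[unfolded phi_def], assumption, rule W_mono) (auto simp: dn_def intro: trn)

lemma phi_T: "q \<in> Q \<Longrightarrow> phi q + w q \<le> T"
  unfolding T_def by (subst phi_plus, assumption, rule W_mono) (auto simp: dn_def)

lemma phi_nonneg: "0 \<le> phi q" unfolding phi_def by (rule W_nonneg)

lemma downset_props:
  assumes "downset M"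
  shows "\<And>p. p \<in> M \<Longrightarrow> phi p + w p \<le> W M" and "\<And>p. p \<in> Q - M \<Longrightarrow> W M \<le> phi p"
proof -
  fix p assume "p \<in> M"
  then have "p \<in> Q" using assms by (auto simp: downset_def)
  then have "phi p + w p = W (insert p (dn p))" by (rule phi_plus)
  also have "\<dots> \<le> W M" using assms \<open>p \<in> M\<close> by (intro W_mono) (auto simp: downset_def dn_def)
  finally show "phi p + w p \<le> W M" .
next
  fix p assume p: "p \<in> Q - M"
  have "M \<subseteq> dn p"
  proof
    fix q assume q: "q \<in> M"
    then have "q \<in> Q" using assms by (auto simp: downset_def)
    moreover have "q \<noteq> p" using p q by auto
    moreover have "\<not> lt p q" using assms p q unfolding downset_def by auto
    ultimately show "q \<in> dn p" using tot[of p q] p by (auto simp: dn_def)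
  qed
  then show "W M \<le> phi p" unfolding phi_def by (rule W_mono) (rule dn_sub)
qed


lemma clamp0: "t \<le> 0 \<Longrightarrow> clamp t = 0" unfolding clamp_def by simp
lemma clamp1: "1 \<le> t \<Longrightarrow> clamp t = 1" unfolding clamp_def by simp
lemma clampid: "0 \<le> t \<Longrightarrow> t \<le> 1 \<Longrightarrow> clamp t = t" unfolding clamp_def by simp
lemma clamp_mono: "s \<le> t \<Longrightarrow> clamp s \<le> clamp t" unfolding clamp_def by simp
lemma clamp_bnd: "0 \<le> clamp t" "clamp t \<le> 1" unfolding clamp_def by simp_all

lemma aut_summ: "aut f \<Longrightarrow> A \<subseteq> Q \<Longrightarrow> (\<lambda>p. w (f p)) summable_on A"
proof -
  assume a: "aut f" "A \<subseteq> Q"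
  then have "inj_on f A" using aut_inj inj_on_subset by blast
  moreover have "w summable_on (f ` A)" using a aut_in by (intro w_summ) auto
  ultimately show ?thesis using summable_on_reindex[of f A w] by (simp add: o_def)
qed

lemma term_bnd: "0 \<le> w a * clamp t" "w a * clamp t \<le> w a"
proof -
  have "0 \<le> w a" using w_pos[of a] by simp
  then show "0 \<le> w a * clamp t" "w a * clamp t \<le> w a"
    using clamp_bnd[of t] by (simp_all add: mult_left_le)
qed

lemma G_summ: "aut f \<Longrightarrow> A \<subseteq> Q \<Longrightarrow> (\<lambda>p. w (f p) * clamp ((x - phi p) / w p)) summable_on A"
  apply (rule summable_on_comparison_test[OF aut_summ], assumption+)
  using term_bnd by auto

lemma G_downset:
  assumes f: "aut f" and L: "downset L" and a1: "\<And>p. p \<in> L \<Longrightarrow> phi p + w p \<le> x"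
    and a2: "\<And>p. p \<in> Q - L \<Longrightarrow> x \<le> phi p"
  shows "G f x = W (f ` L)"
proof -
  have LQ: "L \<subseteq> Q" using L by (simp add: downset_def)
  have "G f x = infsum (\<lambda>p. w (f p)) L"
    unfolding G_def
  proof (rule infsum_cong_neutral)
    fix p assume "p \<in> L - Q" then show "w (f p) = 0" using LQ by auto
  next
    fix p assume p: "p \<in> Q - L"
    have "(x - phi p) / w p \<le> 0" using a2[OF p] w_pos[of p] by (simp add: divide_nonpos_pos)
    then show "w (f p) * clamp ((x - phi p) / w p) = 0" by (simp add: clamp0)
  next
    fix p assume p: "p \<in> Q \<inter> L"
    have "1 \<le> (x - phi p) / w p" using a1[of p] p w_pos[of p] by (simp add: le_divide_eq_1_pos)
    then show "w (f p) * clamp ((x - phi p) / w p) = w (f p)" by (simp add: clamp1)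
  qed
  also have "\<dots> = W (f ` L)" using aut_Wimg[OF f LQ] .
  finally show ?thesis .
qed

lemma G_interval:
  assumes f: "aut f" and q: "q \<in> Q" and x1: "phi q \<le> x" and x2: "x \<le> phi q + w q"
  shows "G f x = phi (f q) + w (f q) * ((x - phi q) / w q)"
proof -
  let ?c = "\<lambda>p. w (f p) * clamp ((x - phi p) / w p)"
  have r01: "0 \<le> (x - phi q) / w q" "(x - phi q) / w q \<le> 1"
    using x1 x2 w_pos[of q] by (auto simp: divide_le_eq_1_pos)
  have "G f x = infsum ?c (insert q (dn q))"
    unfolding G_def
  proof (rule infsum_cong_neutral)
    fix p assume "p \<in> insert q (dn q) - Q" then show "?c p = 0" using q dn_sub by auto
  next
    fix p assume p: "p \<in> Q - insert q (dn q)"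
    then have "lt q p" using tot[of p q] q by (auto simp: dn_def)
    then have "x \<le> phi p" using phi_lt[of q p] p q x2 by auto
    then have "(x - phi p) / w p \<le> 0" using w_pos[of p] by (simp add: divide_nonpos_pos)
    then show "?c p = 0" by (simp add: clamp0)
  qed auto
  also have "\<dots> = ?c q + infsum ?c (dn q)"
    by (rule infsum_insert[OF G_summ[OF f dn_sub]]) (simp add: dn_def irr q)
  also have "infsum ?c (dn q) = infsum (\<lambda>p. w (f p)) (dn q)"
  proof (rule infsum_cong)
    fix p assume p: "p \<in> dn q"
    then have "phi p + w p \<le> x" using phi_lt[of p q] q x1 by (auto simp: dn_def)
    then have "1 \<le> (x - phi p) / w p" using w_pos[of p] by (simp add: le_divide_eq_1_pos)
    then show "?c p = w (f p)" by (simp add: clamp1)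
  qed
  also have "\<dots> = phi (f q)" unfolding phi_def using aut_Wimg[OF f dn_sub] aut_dn[OF f q] by simp
  finally show ?thesis using clampid[OF r01] by simp
qed

lemma H_eq_G: "0 \<le> x \<Longrightarrow> x \<le> T \<Longrightarrow> H f x = G f x"
  unfolding H_def by simp

lemma downset_empty: "downset {}" by (simp add: downset_def)
lemma downset_Q: "downset Q" by (simp add: downset_def)

lemma H_low: "aut f \<Longrightarrow> x \<le> 0 \<Longrightarrow> H f x = x"
proof -
  assume f: "aut f" and x: "x \<le> 0"
  have "G f x = W (f ` {})"
    by (rule G_downset[OF f downset_empty]) (use x phi_nonneg order_trans in auto)
  moreover have "0 \<le> T" unfolding T_def by (rule W_nonneg)
  ultimately show ?thesis unfolding H_def using x by (simp add: W_def)
qed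

lemma H_high: "aut f \<Longrightarrow> T \<le> x \<Longrightarrow> H f x = x"
proof -
  assume f: "aut f" and x: "T \<le> x"
  have "G f x = W (f ` Q)"
    by (rule G_downset[OF f downset_Q]) (use x phi_T order_trans in auto)
  moreover have "0 \<le> T" unfolding T_def by (rule W_nonneg)
  ultimately show ?thesis unfolding H_def using x aut_img[OF f] by (simp add: T_def)
qed

lemma aut_comp: "aut f \<Longrightarrow> aut g \<Longrightarrow> aut (\<lambda>p. f (g p))"
proof -
  assume f: "aut f" and g: "aut g"
  have "bij_betw (f \<circ> g) Q Q" using f g bij_betw_trans[of g Q Q f Q] by (auto simp: aut_def)
  moreover have "\<forall>p\<in>Q. \<forall>q\<in>Q. lt p q \<longrightarrow> lt (f (g p)) (f (g q))"
    using f g aut_in[OF g] by (auto simp: aut_def)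
  ultimately show ?thesis by (simp add: aut_def o_def)
qed

lemma aut_id: "aut (\<lambda>p. p)"
  unfolding aut_def by (simp add: bij_betw_def)


lemma fin_ext:
  fixes r :: "'a \<Rightarrow> 'a \<Rightarrow> bool"
  assumes rt: "\<And>a b c. a \<in> Q \<Longrightarrow> b \<in> Q \<Longrightarrow> c \<in> Q \<Longrightarrow> r a b \<Longrightarrow> r b c \<Longrightarrow> r a c"
    and rtot: "\<And>a b. a \<in> Q \<Longrightarrow> b \<in> Q \<Longrightarrow> a \<noteq> b \<Longrightarrow> r a b \<or> r b a"
  shows "finite F \<Longrightarrow> F \<noteq> {} \<Longrightarrow> F \<subseteq> Q \<Longrightarrow> \<exists>m\<in>F. \<forall>p\<in>F. p = m \<or> r p m"
proof (induction F rule: finite_ne_induct)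
  case (singleton x) then show ?case by auto
next
  case (insert x F)
  then obtain m where m: "m \<in> F" "\<forall>p\<in>F. p = m \<or> r p m" by auto
  have xQ: "x \<in> Q" and mQ: "m \<in> Q" using insert m by auto
  show ?case
  proof (cases "r m x")
    case True
    have "\<forall>p\<in>insert x F. p = x \<or> r p x"
    proof
      fix p assume p: "p \<in> insert x F"
      show "p = x \<or> r p x"
      proof (cases "p = x")
        case False
        then have "p \<in> F" using p by auto
        moreover have pQ: "p \<in> Q" using \<open>p \<in> F\<close> insert.prems by auto
        ultimately show ?thesis using m(2) True rt[OF pQ mQ xQ] by auto
      qed simp
    qed
    then show ?thesis by auto
  next
    case False
    then have "x = m \<or> r x m" using rtot[OF xQ mQ] by auto
    then show ?thesis using m by auto
  qed
qed

lemma fin_max: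
  assumes F: "finite F" "F \<noteq> {}" "F \<subseteq> Q"
  shows "\<exists>m\<in>F. \<forall>p\<in>F. p = m \<or> lt p m"
proof -
  have r1: "lt a c" if "a \<in> Q" "b \<in> Q" "c \<in> Q" "lt a b" "lt b c" for a b c
    using trn[of a b c] that by blast
  have r2: "lt a b \<or> lt b a" if "a \<in> Q" "b \<in> Q" "a \<noteq> b" for a b
    using tot[of a b] that by blast
  show ?thesis
    apply (rule fin_ext[where r = lt])
    using r1 r2 F by blast+
qed

lemma fin_min:
  assumes F: "finite F" "F \<noteq> {}" "F \<subseteq> Q"
  shows "\<exists>m\<in>F. \<forall>p\<in>F. p = m \<or> lt m p"
proof -
  have r1: "lt c a" if "a \<in> Q" "b \<in> Q" "c \<in> Q" "lt b a" "lt c b" for a b c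
    using trn[of c b a] that by blast
  have r2: "lt b a \<or> lt a b" if "a \<in> Q" "b \<in> Q" "a \<noteq> b" for a b
    using tot[of a b] that by blast
  show ?thesis
    apply (rule fin_ext[where r = "\<lambda>a b. lt b a"])
    using r1 r2 F by blast+
qed

lemma gap_cut:
  assumes x0: "0 \<le> x" and xT: "x \<le> T"
    and gap: "\<not> (\<exists>q\<in>Q. phi q \<le> x \<and> x \<le> phi q + w q)"
  shows "W {p \<in> Q. phi p + w p \<le> x} = x"
proof -
  define L where "L = {p \<in> Q. phi p + w p \<le> x}"
  have LQ: "L \<subseteq> Q" unfolding L_def by auto
  have out: "x < phi p" if "p \<in> Q - L" for p
    using that gap unfolding L_def by force
  have i: "W L \<le> x"
    unfolding W_def
  proof (rule infsum_le_finite_sums[OF w_summ[OF LQ]])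
    fix F assume F: "finite F" "F \<subseteq> L"
    show "sum w F \<le> x"
    proof (cases "F = {}")
      case True then show ?thesis using x0 by simp
    next
      case False
      then obtain m where m: "m \<in> F" "\<forall>p\<in>F. p = m \<or> lt p m" using fin_max[OF F(1)] F LQ by blast
      have mQ: "m \<in> Q" using m F LQ by auto
      have "sum w F = W F" using W_finite[OF F(1)] by simp
      also have "\<dots> \<le> W (insert m (dn m))" using m F LQ mQ by (intro W_mono) (auto simp: dn_def)
      also have "\<dots> = phi m + w m" using phi_plus[OF mQ] by simp
      also have "\<dots> \<le> x" using m F unfolding L_def by auto
      finally show ?thesis .
    qed
  qed
  have ii: "W (Q - L) \<le> T - x"
    unfolding W_def
  proof (rule infsum_le_finite_sums[OF w_summ])
    show "Q - L \<subseteq> Q" by auto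
    fix F assume F: "finite F" "F \<subseteq> Q - L"
    show "sum w F \<le> T - x"
    proof (cases "F = {}")
      case True then show ?thesis using xT by simp
    next
      case False
      then obtain m where m: "m \<in> F" "\<forall>p\<in>F. p = m \<or> lt m p" using fin_min[OF F(1)] F by blast
      have mQ: "m \<in> Q" using m F by auto
      have FD: "F \<subseteq> Q - dn m"
      proof
        fix p assume p: "p \<in> F"
        then have pQ: "p \<in> Q" using F by auto
        have "\<not> lt p m"
        proof
          assume pm: "lt p m"
          have "p = m \<or> lt m p" using m(2) p by auto
          then show False using pm irr[OF mQ] trn[OF mQ pQ mQ] by auto
        qed
        then show "p \<in> Q - dn m" using pQ by (auto simp: dn_def)
      qed
      have "sum w F = W F" using W_finite[OF F(1)] by simp
      also have "\<dots> \<le> W (Q - dn m)" using FD by (intro W_mono) auto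
      also have "\<dots> = T - phi m"
        using W_Un[of "dn m" "Q - dn m"] dn_sub[of m] unfolding T_def phi_def
        by (simp add: Un_absorb1)
      also have "\<dots> \<le> T - x" using out[of m] m F by auto
      finally show ?thesis .
    qed
  qed
  have "W L + W (Q - L) = T"
    using W_Un[of L "Q - L"] LQ unfolding T_def by (simp add: Un_absorb1)
  then show ?thesis using i ii unfolding L_def by linarith
qed

lemma H_comp:
  assumes f: "aut f" and g: "aut g"
  shows "H f (H g x) = H (\<lambda>p. f (g p)) x"
proof -
  have fg: "aut (\<lambda>p. f (g p))" using aut_comp[OF f g] .
  have T0: "0 \<le> T" unfolding T_def by (rule W_nonneg)
  consider "x \<le> 0" | "T \<le> x" | "0 \<le> x" "x \<le> T" by linarith
  then show ?thesis
  proof cases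
    case 1 then show ?thesis using H_low[OF f] H_low[OF g] H_low[OF fg] by simp
  next
    case 2 then show ?thesis using H_high[OF f] H_high[OF g] H_high[OF fg] by simp
  next
    case 3
    show ?thesis
    proof (cases "\<exists>q\<in>Q. phi q \<le> x \<and> x \<le> phi q + w q")
      case True
      then obtain q where q: "q \<in> Q" "phi q \<le> x" "x \<le> phi q + w q" by blast
      define t where "t = (x - phi q) / w q"
      have t01: "0 \<le> t" "t \<le> 1" using q w_pos[of q] by (auto simp: t_def divide_le_eq_1_pos)
      have gq: "g q \<in> Q" using aut_in[OF g q(1)] .
      define y where "y = phi (g q) + w (g q) * t"
      have Hg: "H g x = y" using H_eq_G[OF 3] G_interval[OF g q] by (simp add: y_def t_def)
      have y1: "phi (g q) \<le> y" "y \<le> phi (g q) + w (g q)"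
        using t01 w_pos[of "g q"] by (auto simp: y_def mult_left_le)
      have y0: "0 \<le> y" "y \<le> T" using y1 phi_nonneg[of "g q"] phi_T[OF gq] by auto
      have "H f y = phi (f (g q)) + w (f (g q)) * ((y - phi (g q)) / w (g q))"
        using H_eq_G[OF y0] G_interval[OF f gq y1] by simp
      also have "(y - phi (g q)) / w (g q) = t" using w_pos[of "g q"] by (simp add: y_def)
      finally have "H f y = phi (f (g q)) + w (f (g q)) * t" .
      moreover have "H (\<lambda>p. f (g p)) x = phi (f (g q)) + w (f (g q)) * t"
        using H_eq_G[OF 3] G_interval[OF fg q] by (simp add: t_def)
      ultimately show ?thesis using Hg by simp
    next
      case False
      define L where "L = {p \<in> Q. phi p + w p \<le> x}"
      have LQ: "L \<subseteq> Q" unfolding L_def by auto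
      have dL: "downset L" unfolding downset_def L_def
      proof (intro conjI ballI impI, blast)
        fix q p assume q: "q \<in> {p \<in> Q. phi p + w p \<le> x}" and p: "p \<in> Q" "lt p q"
        then show "p \<in> {p \<in> Q. phi p + w p \<le> x}"
          using phi_lt[of p q] w_pos[of q] by auto
      qed
      have a1: "\<And>p. p \<in> L \<Longrightarrow> phi p + w p \<le> x" unfolding L_def by auto
      have a2: "\<And>p. p \<in> Q - L \<Longrightarrow> x \<le> phi p" using False unfolding L_def by force
      have Gg: "G g x = W (g ` L)" by (rule G_downset[OF g dL a1 a2])
      have Gfg: "G (\<lambda>p. f (g p)) x = W ((\<lambda>p. f (g p)) ` L)" by (rule G_downset[OF fg dL a1 a2])
      have dM: "downset (g ` L)" by (rule aut_downset[OF g dL])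
      have MQ: "g ` L \<subseteq> Q" using dM by (simp add: downset_def)
      have y0: "0 \<le> W (g ` L)" "W (g ` L) \<le> T" unfolding T_def using W_nonneg W_mono[OF MQ] by auto
      have "G f (W (g ` L)) = W (f ` g ` L)"
        by (rule G_downset[OF f dM]) (use downset_props[OF dM] in auto)
      then show ?thesis using H_eq_G[OF 3] H_eq_G[OF y0] Gg Gfg by (simp add: image_image)
    qed
  qed
qed

lemma H_id: "H (\<lambda>p. p) x = x"
proof -
  have T0: "0 \<le> T" unfolding T_def by (rule W_nonneg)
  consider "x \<le> 0" | "T \<le> x" | "0 \<le> x" "x \<le> T" by linarith
  then show ?thesis
  proof cases
    case 1 then show ?thesis using H_low[OF aut_id] by simp
  next
    case 2 then show ?thesis using H_high[OF aut_id] by simp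
  next
    case 3
    show ?thesis
    proof (cases "\<exists>q\<in>Q. phi q \<le> x \<and> x \<le> phi q + w q")
      case True
      then obtain q where q: "q \<in> Q" "phi q \<le> x" "x \<le> phi q + w q" by blast
      show ?thesis using H_eq_G[OF 3] G_interval[OF aut_id q] w_pos[of q] by simp
    next
      case False
      define L where "L = {p \<in> Q. phi p + w p \<le> x}"
      have dL: "downset L" unfolding downset_def L_def
      proof (intro conjI ballI impI, blast)
        fix q p assume q: "q \<in> {p \<in> Q. phi p + w p \<le> x}" and p: "p \<in> Q" "lt p q"
        then show "p \<in> {p \<in> Q. phi p + w p \<le> x}"
          using phi_lt[of p q] w_pos[of q] by auto
      qed
      have a1: "\<And>p. p \<in> L \<Longrightarrow> phi p + w p \<le> x" unfolding L_def by auto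
      have a2: "\<And>p. p \<in> Q - L \<Longrightarrow> x \<le> phi p" using False unfolding L_def by force
      have "G (\<lambda>p. p) x = W L" using G_downset[OF aut_id dL a1 a2] by simp
      then show ?thesis using H_eq_G[OF 3] gap_cut[OF 3 False] unfolding L_def by simp
    qed
  qed
qed

lemma H_mono: "aut f \<Longrightarrow> x \<le> y \<Longrightarrow> H f x \<le> H f y"
proof -
  assume f: "aut f" and xy: "x \<le> y"
  have "G f x \<le> G f y" unfolding G_def
  proof (rule infsum_mono[OF G_summ[OF f] G_summ[OF f]])
    fix p assume "p \<in> Q"
    have "(x - phi p) / w p \<le> (y - phi p) / w p"
      using xy w_pos[of p] by (simp add: divide_right_mono)
    then have "clamp ((x - phi p) / w p) \<le> clamp ((y - phi p) / w p)" by (rule clamp_mono)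
    then show "w (f p) * clamp ((x - phi p) / w p) \<le> w (f p) * clamp ((y - phi p) / w p)"
      using w_pos[of "f p"] by (simp add: mult_left_mono)
  qed auto
  then show ?thesis unfolding H_def using xy by simp
qed

lemma H_phi: "aut f \<Longrightarrow> q \<in> Q \<Longrightarrow> H f (phi q) = phi (f q)"
proof -
  assume f: "aut f" and q: "q \<in> Q"
  have "0 \<le> phi q" "phi q \<le> T" using phi_nonneg phi_T[OF q] w_pos[of q] by auto
  then show ?thesis using H_eq_G G_interval[OF f q] w_pos[of q] by simp
qed

lemma phi_inj: "p \<in> Q \<Longrightarrow> q \<in> Q \<Longrightarrow> phi p = phi q \<Longrightarrow> p = q"
  using tot[of p q] phi_lt[of p q] phi_lt[of q p] w_pos[of p] w_pos[of q] by force

lemma aut_inv: "aut f \<Longrightarrow> aut (inv_into Q f)"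
proof -
  assume f: "aut f"
  have b: "bij_betw (inv_into Q f) Q Q" using f bij_betw_inv_into by (auto simp: aut_def)
  have "lt (inv_into Q f p) (inv_into Q f q)" if "p \<in> Q" "q \<in> Q" "lt p q" for p q
  proof -
    have "inv_into Q f p \<in> Q" "inv_into Q f q \<in> Q" using b that by (auto simp: bij_betw_def)
    moreover have "f (inv_into Q f p) = p" "f (inv_into Q f q) = q"
      using that aut_img[OF f] by (auto intro: f_inv_into_f)
    ultimately show ?thesis using aut_lt[OF f] that by metis
  qed
  then show ?thesis using b by (simp add: aut_def)
qed

lemma H_cong: "(\<And>p. p \<in> Q \<Longrightarrow> f p = g p) \<Longrightarrow> H f = H g"
  unfolding H_def G_def by (intro ext) (simp cong: infsum_cong)

lemma H_inv1: "aut f \<Longrightarrow> H f (H (inv_into Q f) x) = x"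
proof -
  assume f: "aut f"
  have "H f (H (inv_into Q f) x) = H (\<lambda>p. f (inv_into Q f p)) x" by (rule H_comp[OF f aut_inv[OF f]])
  also have "H (\<lambda>p. f (inv_into Q f p)) = H (\<lambda>p. p)"
    by (rule H_cong) (metis aut_img[OF f] f_inv_into_f)
  finally show ?thesis using H_id by simp
qed

lemma H_inv2: "aut f \<Longrightarrow> H (inv_into Q f) (H f x) = x"
proof -
  assume f: "aut f"
  have "H (inv_into Q f) (H f x) = H (\<lambda>p. inv_into Q f (f p)) x" by (rule H_comp[OF aut_inv[OF f] f])
  also have "H (\<lambda>p. inv_into Q f (f p)) = H (\<lambda>p. p)"
    by (rule H_cong) (use aut_inj[OF f] inv_into_f_f in auto)
  finally show ?thesis using H_id by simp
qed

lemma H_homeo: "aut f \<Longrightarrow> H f \<in> Homeo_plus"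
  by (rule homeo_plus_intro[where g = "H (inv_into Q f)"])
     (auto intro: monoI H_mono aut_inv H_inv1 H_inv2)

end


theorem lemma3p5:
  fixes Q :: "'a set" and op :: "'a \<Rightarrow> 'a \<Rightarrow> 'a" and lt :: "'a \<Rightarrow> 'a \<Rightarrow> bool"
  assumes "quandle Q op" and "countable Q" and "weak_latin Q op"
    and "right_order Q op lt"
  shows "\<exists>\<rho> :: 'a \<Rightarrow> (real \<Rightarrow> real).
           (\<forall>q\<in>Q. \<rho> q \<in> Homeo_plus) \<and> inj_on \<rho> Q \<and>
           (\<forall>r\<in>Q. \<forall>s\<in>Q. \<rho> (op r s) = inv (\<rho> s) \<circ> \<rho> r \<circ> \<rho> s)"
proof -
  note qq = assms(1)[unfolded quandle_def]
  note qd = conjunct1[OF qq] conjunct1[OF conjunct2[OF conjunct2[OF qq]]]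
    conjunct2[OF conjunct2[OF conjunct2[OF qq]]]
  note rr = assms(4)[unfolded right_order_def]
  note ro = conjunct1[OF rr] conjunct1[OF conjunct2[OF rr]]
    conjunct1[OF conjunct2[OF conjunct2[OF rr]]] conjunct2[OF conjunct2[OF conjunct2[OF rr]]]
  interpret O: ordQ Q lt
  proof
    show "countable Q" by (rule assms(2))
  qed (use ro in blast)+
  define R where "R q = (\<lambda>p. op p q)" for q
  have autR: "O.aut (R q)" if q: "q \<in> Q" for q
  proof -
    have inj: "inj_on (R q) Q"
    proof (rule inj_onI)
      fix a b assume ab: "a \<in> Q" "b \<in> Q" "R q a = R q b"
      have "R q a \<in> Q" using qd(1) ab q by (auto simp: R_def)
      then have "\<exists>!p. p \<in> Q \<and> op p q = R q a" using qd(2) q by blast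
      then obtain p where p: "\<forall>y. y \<in> Q \<and> op y q = R q a \<longrightarrow> y = p" by (rule ex1E) blast
      have "a = p" using p ab(1) by (simp add: R_def)
      moreover have "b = p" using p ab(2,3) by (simp add: R_def)
      ultimately show "a = b" by simp
    qed
    have img: "R q ` Q = Q"
    proof
      show "R q ` Q \<subseteq> Q" using qd(1) q by (auto simp: R_def)
      show "Q \<subseteq> R q ` Q"
      proof
        fix c assume "c \<in> Q"
        then obtain p where "p \<in> Q" "op p q = c" using qd(2) q by blast
        then show "c \<in> R q ` Q" by (auto simp: R_def)
      qed
    qed
    show ?thesis unfolding O.aut_def bij_betw_def using inj img ro(4) q by (auto simp: R_def)
  qed
  define Ri where "Ri q = inv_into Q (R q)" for q
  have autRi: "O.aut (Ri q)" if "q \<in> Q" for q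
    unfolding Ri_def by (rule O.aut_inv[OF autR[OF that]])
  define \<rho> where "\<rho> q = O.H (Ri q)" for q
  have hom: "\<rho> (op r s) = inv (\<rho> s) \<circ> \<rho> r \<circ> \<rho> s" if r: "r \<in> Q" and s: "s \<in> Q" for r s
  proof -
    have "inv (\<rho> s) = O.H (R s)"
      by (rule inv_unique_comp)
         (auto simp: \<rho>_def Ri_def O.H_inv1[OF autR[OF s]] O.H_inv2[OF autR[OF s]])
    then have "inv (\<rho> s) \<circ> \<rho> r \<circ> \<rho> s = (\<lambda>x. O.H (R s) (O.H (Ri r) (O.H (Ri s) x)))"
      by (simp add: \<rho>_def o_def)
    also have "\<dots> = O.H (\<lambda>p. R s (Ri r (Ri s p)))"
      using O.H_comp[OF autR[OF s] autRi[OF r]] O.H_comp[OF O.aut_comp[OF autR[OF s] autRi[OF r]] autRi[OF s]]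
      by (intro ext) simp
    also have "\<dots> = O.H (Ri (op r s))"
    proof (rule O.H_cong)
      fix p assume p: "p \<in> Q"
      have rs: "op r s \<in> Q" using qd(1) r s by auto
      define u where "u = Ri s p"
      define v where "v = Ri r u"
      have uQ: "u \<in> Q" using O.aut_in[OF autRi[OF s] p] by (simp add: u_def)
      have vQ: "v \<in> Q" using O.aut_in[OF autRi[OF r] uQ] by (simp add: v_def)
      have Ru: "R s u = p" unfolding u_def Ri_def
        using p O.aut_img[OF autR[OF s]] by (metis f_inv_into_f)
      have Rv: "R r v = u" unfolding v_def Ri_def
        using uQ O.aut_img[OF autR[OF r]] by (metis f_inv_into_f)
      have "R (op r s) (R s v) = R s (R r v)"
        using qd(3)[rule_format, OF vQ r s] by (simp add: R_def)
      also have "\<dots> = p" using Rv Ru by simp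
      finally have eq: "R (op r s) (R s v) = p" .
      have "R s v \<in> Q" using O.aut_in[OF autR[OF s] vQ] .
      then have "Ri (op r s) p = R s v"
        unfolding Ri_def using eq O.aut_inj[OF autR[OF rs]] by (metis inv_into_f_f)
      then show "R s (Ri r (Ri s p)) = Ri (op r s) p" by (simp add: u_def v_def)
    qed
    finally show ?thesis by (simp add: \<rho>_def)
  qed
  have inj: "inj_on \<rho> Q"
  proof (rule inj_onI)
    fix r s assume r: "r \<in> Q" and s: "s \<in> Q" and eq: "\<rho> r = \<rho> s"
    have eqR: "R r t = R s t" if t: "t \<in> Q" for t
    proof -
      define p where "p = R r t"
      have pQ: "p \<in> Q" using O.aut_in[OF autR[OF r] t] by (simp add: p_def)
      have "O.phi (Ri r p) = O.phi (Ri s p)"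
        using O.H_phi[OF autRi[OF r] pQ] O.H_phi[OF autRi[OF s] pQ] eq by (simp add: \<rho>_def)
      then have "Ri r p = Ri s p"
        using O.phi_inj O.aut_in[OF autRi[OF r] pQ] O.aut_in[OF autRi[OF s] pQ] by blast
      moreover have "Ri r p = t" unfolding Ri_def p_def
        using t O.aut_inj[OF autR[OF r]] by (metis inv_into_f_f)
      ultimately have "Ri s p = t" by simp
      then have "R s t = p" unfolding Ri_def
        using pQ O.aut_img[OF autR[OF s]] by (metis f_inv_into_f)
      then show ?thesis by (simp add: p_def)
    qed
    obtain qh where qh: "qh \<in> Q" "op qh r = op qh s \<longrightarrow> r = s"
      using assms(3) r s unfolding weak_latin_def by blast
    show "r = s" using qh eqR[OF qh(1)] by (simp add: R_def)
  qed
  have "\<forall>q\<in>Q. \<rho> q \<in> Homeo_plus"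
    using O.H_homeo autRi by (simp add: \<rho>_def)
  then show ?thesis using inj hom by blast
qed

end
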